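(* If $L:\mathbb{R}^d\setminus\{0\}\to\mathbb{R}$ is $C^2$ and scale invariant, then $$\sup_{x,x'\neq0}\big(L(x)-L(x')\big)\le\frac{\pi^2}{2}\sup_{\|y\|_2=1}\|\nabla^2L(y)\|_2 .$$
   Context: Scale invariant means $L(cx)=L(x)$ for all $c>0$, $x\neq0$. $\|\cdot\|_2$ on matrices is the spectral norm. *)

theory Defs
  imports "HOL-Analysis.Analysis"
begin

definition scale_invariant :: "(real^'n \<Rightarrow> real) \<Rightarrow> bool" where
  "scale_invariant L \<longleftrightarrow> (\<forall>c x. c > 0 \<longrightarrow> x \<noteq> 0 \<longrightarrow> L (c *\<^sub>R x) = L x)"

definition C2_with_hessian ::
  "(real^'n) set \<Rightarrow> (real^'n \<Rightarrow> real) \<Rightarrow> (real^'n \<Rightarrow> real^'n^'n) \<Rightarrow> bool" where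
  "C2_with_hessian S L H \<longleftrightarrow> open S \<and>
     (\<exists>g. \<forall>x\<in>S. (L has_derivative (\<lambda>h. g x \<bullet> h)) (at x) \<and>
                 (g has_derivative (\<lambda>h. H x *v h)) (at x)) \<and>
     continuous_on S H"

definition spectral_norm :: "real^'n^'n \<Rightarrow> real" where
  "spectral_norm A = onorm (\<lambda>h. A *v h)"

end

theory Submission imports Defs begin

lemma chain_real:
  fixes \<gamma> :: "real \<Rightarrow> real^'n"
  assumes "(\<gamma> has_vector_derivative d) (at t)" "(F has_derivative (\<lambda>h. G \<bullet> h)) (at (\<gamma> t))"
  shows "((\<lambda>s. F (\<gamma> s)) has_real_derivative (G \<bullet> d)) (at t)"
proof -
  have "((\<lambda>s. F (\<gamma> s)) has_derivative (\<lambda>h. G \<bullet> (h *\<^sub>R d))) (at t)"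
    using has_derivative_compose[OF assms(1)[unfolded has_vector_derivative_def] assms(2)] .
  moreover have "(\<lambda>h. G \<bullet> (h *\<^sub>R d)) = (*) (G \<bullet> d)" by (auto simp: fun_eq_iff)
  ultimately show ?thesis unfolding has_field_derivative_def by simp
qed

lemma chain_mat:
  fixes \<gamma> :: "real \<Rightarrow> real^'n"
  assumes "(\<gamma> has_vector_derivative d) (at t)" "(g has_derivative (\<lambda>h. A *v h)) (at (\<gamma> t))"
  shows "((\<lambda>s. g (\<gamma> s)) has_vector_derivative (A *v d)) (at t)"
proof -
  have "((\<lambda>s. g (\<gamma> s)) has_derivative (\<lambda>h. A *v (h *\<^sub>R d))) (at t)"
    using has_derivative_compose[OF assms(1)[unfolded has_vector_derivative_def] assms(2)] .
  then show ?thesis unfolding has_vector_derivative_def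
    by (simp add: matrix_vector_mult_scaleR)
qed

lemma circ_deriv:
  fixes x v :: "real^'n"
  shows "((\<lambda>s. cos s *\<^sub>R x + sin s *\<^sub>R v) has_vector_derivative (- sin t *\<^sub>R x + cos t *\<^sub>R v)) (at t)"
  by (auto intro!: derivative_eq_intros)

lemma circ_deriv2:
  fixes x v :: "real^'n"
  shows "((\<lambda>s. - sin s *\<^sub>R x + cos s *\<^sub>R v) has_vector_derivative (- (cos t *\<^sub>R x + sin t *\<^sub>R v))) (at t)"
  by (auto intro!: derivative_eq_intros)

lemma quad_bound:
  fixes A :: "real^'n^'n"
  shows "\<bar>d \<bullet> (A *v d)\<bar> \<le> spectral_norm A * (norm d)^2"
proof -
  have "\<bar>d \<bullet> (A *v d)\<bar> \<le> norm d * norm (A *v d)" by (rule Cauchy_Schwarz_ineq2)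
  also have "\<dots> \<le> norm d * (spectral_norm A * norm d)"
    unfolding spectral_norm_def
    by (rule mult_left_mono[OF onorm[OF matrix_vector_mul_bounded_linear]]) simp
  finally show ?thesis by (simp add: power2_eq_square mult_ac)
qed

theorem mainTheorem7:
  fixes L :: "real^'n \<Rightarrow> real" and H :: "real^'n \<Rightarrow> real^'n^'n"
  assumes dim: "CARD('n) \<ge> 2"
    and C2: "C2_with_hessian (UNIV - {0}) L H"
    and scale: "scale_invariant L"
  shows "\<forall>x x'. x \<noteq> 0 \<longrightarrow> x' \<noteq> 0 \<longrightarrow>
           L x - L x' \<le> pi\<^sup>2 / 2 * (SUP y\<in>sphere 0 1. spectral_norm (H y))"
proof -
  obtain g where g: "\<forall>x\<in>UNIV-{0}. (L has_derivative (\<lambda>h. g x \<bullet> h)) (at x) \<and>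
                 (g has_derivative (\<lambda>h. H x *v h)) (at x)" and contH: "continuous_on (UNIV-{0}) H"
    using C2 unfolding C2_with_hessian_def by blast
  have gL: "(L has_derivative (\<lambda>h. g x \<bullet> h)) (at x)" if "x \<noteq> 0" for x using g that by blast
  have gH: "(g has_derivative (\<lambda>h. H x *v h)) (at x)" if "x \<noteq> 0" for x using g that by blast
  have sc: "L (c *\<^sub>R x) = L x" if "c > 0" "x \<noteq> 0" for c x
    using scale that unfolding scale_invariant_def by blast
  have euler: "g y \<bullet> y = 0" if y: "y \<noteq> 0" for y
  proof -
    have pd: "((\<lambda>c::real. c *\<^sub>R y) has_vector_derivative y) (at 1)"
      by (auto intro!: derivative_eq_intros)
    have "((\<lambda>c. L (c *\<^sub>R y)) has_real_derivative (g y \<bullet> y)) (at 1)"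
      using chain_real[OF pd] gL[OF y] by simp
    then show ?thesis
    proof (rule DERIV_local_max)
      show "(0::real) < 1/2" by simp
      show "\<forall>c. \<bar>1 - c\<bar> < 1/2 \<longrightarrow> L (c *\<^sub>R y) \<le> L (1 *\<^sub>R y)"
      proof (intro allI impI)
        fix c :: real assume "\<bar>1 - c\<bar> < 1/2"
        then have "c > 0" by linarith
        then show "L (c *\<^sub>R y) \<le> L (1 *\<^sub>R y)" using sc y by simp
      qed
    qed
  qed
  have contL: "continuous_on (sphere 0 1) L"
  proof (rule continuous_at_imp_continuous_on, rule ballI)
    fix x :: "real^'n" assume "x \<in> sphere 0 1"
    then have "x \<noteq> 0" by auto
    then show "isCont L x" using has_derivative_continuous gL by blast
  qed
  obtain xs where xs: "xs \<in> sphere 0 1" and xsmax: "\<And>y. y \<in> sphere 0 1 \<Longrightarrow> L y \<le> L xs"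
    using continuous_attains_sup[OF compact_sphere _ contL] by fastforce
  have "compact (H ` sphere 0 1)"
    by (rule compact_continuous_image[OF continuous_on_subset[OF contH]]) auto
  then obtain K where K: "\<And>y. y \<in> sphere 0 1 \<Longrightarrow> norm (H y) \<le> K"
  proof -
    from \<open>compact (H ` sphere 0 1)\<close> have "bounded (H ` sphere 0 1)" by (rule compact_imp_bounded)
    then obtain b where "\<forall>z\<in>H ` sphere 0 1. norm z \<le> b" unfolding bounded_pos by blast
    then show ?thesis using that by blast
  qed
  have snK: "spectral_norm (H y) \<le> real CARD('n) * real CARD('n) * K" if "y \<in> sphere 0 1" for y
    unfolding spectral_norm_def
  proof (rule onorm_le_matrix_component)
    show "\<bar>H y $ i $ j\<bar> \<le> K" for i j
    proof -
      have "\<bar>H y $ i $ j\<bar> \<le> norm (H y $ i)" by (rule component_le_norm_cart)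
      also have "\<dots> \<le> norm (H y)" by (rule Finite_Cartesian_Product.norm_nth_le)
      also have "\<dots> \<le> K" by (rule K[OF that])
      finally show ?thesis .
    qed
  qed
  define M where "M = (SUP y\<in>sphere 0 1. spectral_norm (H y))"
  have Mge: "spectral_norm (H y) \<le> M" if "y \<in> sphere 0 1" for y
    unfolding M_def
    by (rule cSUP_upper[OF that]) (auto intro!: bdd_aboveI2 snK)
  have M0: "0 \<le> M"
    using Mge[OF xs] onorm_pos_le[OF matrix_vector_mul_bounded_linear] unfolding spectral_norm_def
    by (meson order_trans)
  have claim: "L xs - L w \<le> pi\<^sup>2 / 2 * M" if w: "w \<in> sphere 0 1" for w
  proof -
    have xs1: "xs \<bullet> xs = 1" using xs by (simp add: dot_square_norm)
    define c where "c = w \<bullet> xs"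
    define r where "r = w - c *\<^sub>R xs"
    define s where "s = norm r"
    obtain v where v1: "norm v = 1" and vx: "v \<bullet> xs = 0" and weq: "w = c *\<^sub>R xs + s *\<^sub>R v"
    proof (cases "r = 0")
      case True
      have "2 \<le> DIM(real^'n)" using dim by simp
      then obtain y where y: "y \<noteq> 0" "orthogonal xs y" using orthogonal_to_vector_exists by blast
      show ?thesis
      proof (rule that[of "inverse (norm y) *\<^sub>R y"])
        show "norm (inverse (norm y) *\<^sub>R y) = 1" using y by simp
        show "(inverse (norm y) *\<^sub>R y) \<bullet> xs = 0" using y by (simp add: orthogonal_def inner_commute)
        show "w = c *\<^sub>R xs + s *\<^sub>R (inverse (norm y) *\<^sub>R y)" using True unfolding s_def r_def by simp
      qed
    next
      case False
      then have s0: "s \<noteq> 0" unfolding s_def by simp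
      show ?thesis
      proof (rule that[of "inverse s *\<^sub>R r"])
        show "norm (inverse s *\<^sub>R r) = 1" using s0 unfolding s_def by simp
        show "(inverse s *\<^sub>R r) \<bullet> xs = 0"
          unfolding r_def c_def by (simp add: inner_diff_left xs1)
        show "w = c *\<^sub>R xs + s *\<^sub>R (inverse s *\<^sub>R r)" using s0 unfolding r_def by simp
      qed
    qed
    have vv: "v \<bullet> v = 1" using v1 by (simp add: dot_square_norm)
    have "1 = w \<bullet> w" using w by (simp add: dot_square_norm)
    also have "\<dots> = c^2 + s^2" unfolding weq
      by (simp add: inner_add_left inner_add_right xs1 vv vx inner_commute[of xs v] power2_eq_square)
    finally have cs: "c^2 + s^2 = 1" by simp
    have s0: "s \<ge> 0" unfolding s_def by simp
    have cb: "-1 \<le> c" "c \<le> 1" using cs abs_square_le_1[of c]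
      by (smt (verit) zero_le_power2)+
    define \<theta> where "\<theta> = arccos c"
    have cth: "cos \<theta> = c" unfolding \<theta>_def using cb by simp
    have sth: "sin \<theta> = s" unfolding \<theta>_def using cb cs s0
      by (simp add: sin_arccos real_sqrt_unique)
    have th0: "0 \<le> \<theta>" "\<theta> \<le> pi" unfolding \<theta>_def using cb by (auto intro: arccos_lbound arccos_ubound)
    define \<gamma> where "\<gamma> t = cos t *\<^sub>R xs + sin t *\<^sub>R v" for t
    define \<delta> where "\<delta> t = - sin t *\<^sub>R xs + cos t *\<^sub>R v" for t
    have ng: "norm (\<gamma> t) = 1" for t
    proof -
      have "(norm (\<gamma> t))^2 = (cos t)^2 + (sin t)^2" unfolding \<gamma>_def power2_norm_eq_inner
        by (simp add: inner_add_left inner_add_right xs1 vv vx inner_commute[of xs v] power2_eq_square)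
      then show ?thesis by (smt (verit) norm_ge_zero power2_eq_1_iff sin_cos_squared_add)
    qed
    have nd: "norm (\<delta> t) = 1" for t
    proof -
      have "(norm (\<delta> t))^2 = (cos t)^2 + (sin t)^2" unfolding \<delta>_def power2_norm_eq_inner
        by (simp add: inner_add_left inner_add_right inner_diff_left inner_diff_right xs1 vv vx inner_commute[of xs v] power2_eq_square)
      then show ?thesis by (smt (verit) norm_ge_zero power2_eq_1_iff sin_cos_squared_add)
    qed
    have g0: "\<gamma> t \<noteq> 0" for t using ng[of t] by auto
    have gs: "\<gamma> t \<in> sphere 0 1" for t using ng[of t] by simp
    have dg: "(\<gamma> has_vector_derivative \<delta> t) (at t)" for t
      unfolding \<gamma>_def \<delta>_def by (rule circ_deriv)
    have dd: "(\<delta> has_vector_derivative - \<gamma> t) (at t)" for t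
      unfolding \<gamma>_def \<delta>_def by (rule circ_deriv2)
    define f where "f t = L (\<gamma> t)" for t
    define f1 where "f1 t = g (\<gamma> t) \<bullet> \<delta> t" for t
    define f2 where "f2 t = \<delta> t \<bullet> (H (\<gamma> t) *v \<delta> t)" for t
    have Df: "DERIV f t :> f1 t" for t
      unfolding f_def f1_def using chain_real[OF dg gL[OF g0]] .
    have Df1: "DERIV f1 t :> f2 t" for t
    proof -
      have a: "((\<lambda>s. g (\<gamma> s)) has_derivative (\<lambda>h. h *\<^sub>R (H (\<gamma> t) *v \<delta> t))) (at t)"
        using chain_mat[OF dg gH[OF g0]] unfolding has_vector_derivative_def .
      have b: "(\<delta> has_derivative (\<lambda>h. h *\<^sub>R (- \<gamma> t))) (at t)"
        using dd unfolding has_vector_derivative_def .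
      have "(f1 has_derivative (\<lambda>h. g (\<gamma> t) \<bullet> (h *\<^sub>R (- \<gamma> t)) + (h *\<^sub>R (H (\<gamma> t) *v \<delta> t)) \<bullet> \<delta> t)) (at t)"
        unfolding f1_def by (rule has_derivative_inner[OF a b])
      moreover have "(\<lambda>h. g (\<gamma> t) \<bullet> (h *\<^sub>R (- \<gamma> t)) + (h *\<^sub>R (H (\<gamma> t) *v \<delta> t)) \<bullet> \<delta> t) = (*) (f2 t)"
        using euler[OF g0[of t]] by (auto simp: fun_eq_iff f2_def inner_commute)
      ultimately show ?thesis unfolding has_field_derivative_def by simp
    qed
    have f10: "f1 0 = 0"
    proof (rule DERIV_local_max[OF Df])
      show "(0::real) < 1" by simp
      show "\<forall>y. \<bar>0 - y\<bar> < 1 \<longrightarrow> f y \<le> f 0"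
        using xsmax gs unfolding f_def \<gamma>_def by simp
    qed
    have f2b: "f2 t \<ge> - M" for t
    proof -
      have "\<bar>f2 t\<bar> \<le> spectral_norm (H (\<gamma> t))"
        using quad_bound[of "\<delta> t" "H (\<gamma> t)"] nd[of t] unfolding f2_def by simp
      also have "\<dots> \<le> M" by (rule Mge[OF gs])
      finally show ?thesis by linarith
    qed
    have f1b: "f1 t \<ge> - M * t" if tpos: "t > 0" for t
    proof -
      obtain z where "f1 t - f1 0 = (t - 0) * f2 z"
        using MVT2[OF tpos Df1] by blast
      then show ?thesis using f10 f2b[of z] tpos
        by (smt (verit) mult_left_mono mult.commute mult_minus_left)
    qed
    define h where "h t = f t + M * t^2 / 2" for t
    have Dh: "DERIV h t :> f1 t + M * t" for t
      unfolding h_def by (auto intro!: derivative_eq_intros Df)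
    have "f 0 - f \<theta> \<le> M * \<theta>^2 / 2"
    proof (cases "\<theta> = 0")
      case True then show ?thesis by simp
    next
      case False
      then have tp: "\<theta> > 0" using th0 by simp
      obtain z where z: "0 < z" "h \<theta> - h 0 = (\<theta> - 0) * (f1 z + M * z)"
        using MVT2[OF tp Dh] by blast
      have "f1 z + M * z \<ge> 0" using f1b[OF z(1)] by simp
      then have "h \<theta> - h 0 \<ge> 0" using z tp by simp
      then show ?thesis unfolding h_def by simp
    qed
    moreover have "f 0 = L xs" unfolding f_def \<gamma>_def by simp
    moreover have "f \<theta> = L w" unfolding f_def \<gamma>_def using weq cth sth by simp
    moreover have "M * \<theta>^2 / 2 \<le> M * pi^2 / 2"
      using M0 th0 by (simp add: mult_left_mono power_mono divide_right_mono)
    ultimately show ?thesis by (simp add: mult.commute)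
  qed
  show ?thesis
  proof (intro allI impI)
    fix x x' :: "real^'n" assume x: "x \<noteq> 0" and x': "x' \<noteq> 0"
    have "L x = L (inverse (norm x) *\<^sub>R x)" using sc x by simp
    moreover have "L x' = L (inverse (norm x') *\<^sub>R x')" using sc x' by simp
    moreover have "inverse (norm x) *\<^sub>R x \<in> sphere 0 1" "inverse (norm x') *\<^sub>R x' \<in> sphere 0 1"
      using x x' by auto
    ultimately show "L x - L x' \<le> pi\<^sup>2 / 2 * (SUP y\<in>sphere 0 1. spectral_norm (H y))"
      using xsmax claim unfolding M_def by (smt (verit))
  qed
qed

end
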